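(* Let $n\geq 2$, $1\leq j\leq n$ and $1\leq k\leq n-1$. Let $p_{n,k}(j)$ be the probability that the value $j$ is a $k$-peak of a uniformly random permutation in $\mathfrak{S}_n$. Then $$p_{n,k}(j)=\begin{cases}0 & \text{if } j\leq k,\\[2pt] \dfrac{(j-k)(j-k+1)}{(n-k)(n-k+1)} & \text{if } j>k.\end{cases}$$
   Context: $\mathfrak{S}_n$ is the set of permutations $w=w_1\cdots w_n$ of $\{1,\dots,n\}$. A section of $w$ is a consecutive block $w_s\cdots w_t$ ($s\le t$). A section $w_s\cdots w_t$ is a $k$-up if $s<t$ and $w_t-w_s\geq k$, and a $k$-down if $s<t$ and $w_s-w_t\geq k$; a $k$-up/$k$-down "in" $w_a\cdots w_b$ means one $w_s\cdots w_t$ with $a\le s<t\le b$. A section $w_i\cdots w_j$ ($i<j$) is $k$-ascending if $w_i=\min\{w_i,\dots,w_j\}$, $w_j=\max\{w_i,\dots,w_j\}$, $w_j-w_i\geq k$, and there is no $k$-down in it; it is $k$-descending if $w_i=\max$, $w_j=\min$ of $\{w_i,\dots,w_j\}$, $w_i-w_j\geq k$, and there is no $k$-up in it. Such a section is maximal if not contained in another section of the same type. An entry $w_i$ is a $k$-peak of $w$ if it is the last entry of a maximal $k$-ascending section or the first entry of a maximal $k$-descending section; "the value $j$ is a $k$-peak" means the entry $w_i=j$ is a $k$-peak. *)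

theory Defs
  imports Main "HOL-Combinatorics.Multiset_Permutations"
begin

text \<open>A permutation w = w_1 ... w_n of {1..n} is a list; positions are 0-based
  (list index i corresponds to w_{i+1}). A section is a pair of indices (s,t), s \<le> t.\<close>

definition k_up :: "nat list \<Rightarrow> nat \<Rightarrow> nat \<Rightarrow> nat \<Rightarrow> bool" where
  "k_up w k s t \<longleftrightarrow> s < t \<and> t < length w \<and> w ! s + k \<le> w ! t"

definition k_down :: "nat list \<Rightarrow> nat \<Rightarrow> nat \<Rightarrow> nat \<Rightarrow> bool" where
  "k_down w k s t \<longleftrightarrow> s < t \<and> t < length w \<and> w ! t + k \<le> w ! s"

definition k_up_in :: "nat list \<Rightarrow> nat \<Rightarrow> nat \<Rightarrow> nat \<Rightarrow> bool" where
  "k_up_in w k a b \<longleftrightarrow> (\<exists>s t. a \<le> s \<and> s < t \<and> t \<le> b \<and> k_up w k s t)"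

definition k_down_in :: "nat list \<Rightarrow> nat \<Rightarrow> nat \<Rightarrow> nat \<Rightarrow> bool" where
  "k_down_in w k a b \<longleftrightarrow> (\<exists>s t. a \<le> s \<and> s < t \<and> t \<le> b \<and> k_down w k s t)"

definition k_ascending :: "nat list \<Rightarrow> nat \<Rightarrow> nat \<Rightarrow> nat \<Rightarrow> bool" where
  "k_ascending w k i j \<longleftrightarrow> i < j \<and> j < length w \<and>
     w ! i = Min ((!) w ` {i..j}) \<and> w ! j = Max ((!) w ` {i..j}) \<and>
     w ! i + k \<le> w ! j \<and> \<not> k_down_in w k i j"

definition k_descending :: "nat list \<Rightarrow> nat \<Rightarrow> nat \<Rightarrow> nat \<Rightarrow> bool" where
  "k_descending w k i j \<longleftrightarrow> i < j \<and> j < length w \<and>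
     w ! i = Max ((!) w ` {i..j}) \<and> w ! j = Min ((!) w ` {i..j}) \<and>
     w ! j + k \<le> w ! i \<and> \<not> k_up_in w k i j"

definition max_k_ascending :: "nat list \<Rightarrow> nat \<Rightarrow> nat \<Rightarrow> nat \<Rightarrow> bool" where
  "max_k_ascending w k i j \<longleftrightarrow> k_ascending w k i j \<and>
     \<not> (\<exists>i' j'. i' \<le> i \<and> j \<le> j' \<and> (i', j') \<noteq> (i, j) \<and> k_ascending w k i' j')"

definition max_k_descending :: "nat list \<Rightarrow> nat \<Rightarrow> nat \<Rightarrow> nat \<Rightarrow> bool" where
  "max_k_descending w k i j \<longleftrightarrow> k_descending w k i j \<and>
     \<not> (\<exists>i' j'. i' \<le> i \<and> j \<le> j' \<and> (i', j') \<noteq> (i, j) \<and> k_descending w k i' j')"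

definition k_peak_pos :: "nat list \<Rightarrow> nat \<Rightarrow> nat \<Rightarrow> bool" where
  "k_peak_pos w k i \<longleftrightarrow> (\<exists>s. max_k_ascending w k s i) \<or> (\<exists>t. max_k_descending w k i t)"

definition is_k_peak_value :: "nat list \<Rightarrow> nat \<Rightarrow> nat \<Rightarrow> bool" where
  "is_k_peak_value w k v \<longleftrightarrow> (\<exists>i < length w. w ! i = v \<and> k_peak_pos w k i)"

definition p_peak :: "nat \<Rightarrow> nat \<Rightarrow> nat \<Rightarrow> real" where
  "p_peak n k j = real (card {w \<in> permutations_of_set {1..n}. is_k_peak_value w k j})
                  / real (card (permutations_of_set {1..n}))"

end

theory Submission
  imports Defs
begin
definition cN :: "nat \<Rightarrow> nat \<Rightarrow> real" where "cN l s = (if s = 0 then 1 else real l / real s)"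
definition cG :: "nat \<Rightarrow> nat \<Rightarrow> real" where "cG l s = (if s = 0 then 1 else real l / (real (s+1) * real s))"
definition cF :: "nat \<Rightarrow> nat \<Rightarrow> real" where "cF l s = (if s = 0 then 1 else real (l*(l+1)) / (real (s+1) * real s))"

lemma absN: "(S::real) \<noteq> 0 \<Longrightarrow> (S + M) * (L / S) = L + M * (L / S)"
  by (simp add: field_simps)
lemma absG: "(S::real) > 0 \<Longrightarrow> (S + M + 1) * (L / ((S+1)*S)) = L / S + M * (L / ((S+1)*S))"
proof -
  assume "S > 0"
  then have 1: "(S+1) * (L / ((S+1)*S)) = L / S" by simp
  have "(S + M + 1) * (L / ((S+1)*S)) = (S+1) * (L / ((S+1)*S)) + M * (L / ((S+1)*S))"
    using distrib_right[of "S+1" M "L / ((S+1)*S)"] by (simp add: add_ac)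
  then show ?thesis using 1 by simp
qed
lemma absF1: "(S::real) \<noteq> 0 \<Longrightarrow> U \<noteq> 0 \<Longrightarrow> U = L + H - 1 \<Longrightarrow>
   L * ((L-1)*L / (S*U)) + H * (L*(L+1) / (S*U) - L / (S*U)) = L*L/S"
proof -
  assume a: "S \<noteq> 0" "U \<noteq> 0" "U = L + H - 1"
  have "L * ((L-1)*L / (S*U)) + H * (L*(L+1) / (S*U) - L / (S*U)) = (L*L*(L+H-1)) / (S*U)"
    using a by (simp add: field_simps)
  also have "\<dots> = L*L/S" using a by simp
  finally show ?thesis .
qed
lemma absF: "(S::real) > 1 \<Longrightarrow> S = L + H \<Longrightarrow> (S + M + 1) * (L*(L+1) / ((S+1)*S)) = L / S + L * ((L-1)*L / (S*(S-1)))
   + M * (L*(L+1) / ((S+1)*S)) + H * (L*(L+1) / (S*(S-1)) - L / (S*(S-1)))"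
proof -
  assume a: "S > 1" "S = L + H"
  have 1: "(S+1) * (L*(L+1) / ((S+1)*S)) = L*(L+1) / S" using a by simp
  have 2: "L * ((L-1)*L / (S*(S-1))) + H * (L*(L+1) / (S*(S-1)) - L / (S*(S-1))) = L*L/S"
    by (rule absF1) (use a in auto)
  have 3: "L*(L+1) / S = L / S + L*L/S" by (simp add: add_divide_distrib[symmetric] algebra_simps)
  have "(S + M + 1) * (L*(L+1) / ((S+1)*S)) = (S+1) * (L*(L+1) / ((S+1)*S)) + M * (L*(L+1) / ((S+1)*S))"
    using distrib_right[of "S+1" M "L*(L+1) / ((S+1)*S)"] by (simp add: add_ac)
  then show ?thesis using 1 2 3 by simp
qed

lemma idN: "real (l+h+m) * cN l (l+h) = real l + real m * cN l (l+h)"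
proof (cases "l+h = 0")
  case False
  have e: "real (l+h+m) = real (l+h) + real m" "cN l (l+h) = real l / real (l+h)"
    using False by (simp_all only: of_nat_add cN_def if_False)
  show ?thesis unfolding e by (rule absN) (use False in auto)
qed (auto simp: cN_def)

lemma idG: "real (l+h+m+1) * cG l (l+h) = cN l (l+h) + real m * cG l (l+h)"
proof (cases "l+h = 0")
  case False
  have e: "real (l+h+m+1) = real (l+h) + real m + 1" "cN l (l+h) = real l / real (l+h)"
     "cG l (l+h) = real l / ((real (l+h) + 1) * real (l+h))"
    using False by (simp_all only: of_nat_add of_nat_1 cN_def cG_def if_False)
  show ?thesis unfolding e by (rule absG) (use False in auto)
qed (auto simp: cN_def cG_def)

lemma idF: "real (l+h+m+1) * cF l (l+h) = cN l (l+h) + real l * cF (l-1) (l+h-1) + real m * cF l (l+h)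
   + real h * (cF l (l+h-1) - cG l (l+h-1))"
proof (cases "l + h \<le> 1")
  case True
  then consider "l = 0" "h = 0" | "l = 1" "h = 0" | "l = 0" "h = 1" by linarith
  then show ?thesis by cases (auto simp: cN_def cG_def cF_def field_simps)
next
  case False
  define S where "S = real (l+h)"
  have e1: "real (l + h - 1) = S - 1" "real (l+h-1+1) = S" using False unfolding S_def by auto
  have nz: "l + h \<noteq> 0" "l + h - 1 \<noteq> 0" using False by auto
  have e: "real (l+h+m+1) = S + real m + 1" "cN l (l+h) = real l / S"
     "cG l (l+h-1) = real l / (S * (S-1))"
     "cF l (l+h-1) = real l * (real l + 1) / (S * (S-1))"
     "cF l (l+h) = real l * (real l + 1) / ((S+1) * S)"
    using nz e1 unfolding S_def cN_def cG_def cF_def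
    by (simp_all only: if_False of_nat_add of_nat_mult of_nat_1 mult.commute)
  have B: "real l * cF (l-1) (l+h-1) = real l * ((real l-1)*real l / (S*(S-1)))"
    using False e1 by (cases "l = 0") (auto simp: cF_def of_nat_diff)
  show ?thesis unfolding e B
    by (rule absF) (use False in \<open>auto simp: S_def\<close>)
qed

lemma card_perm_filter:
  assumes "finite A" "A \<noteq> {}"
  shows "card {w \<in> permutations_of_set A. P w} = (\<Sum>x\<in>A. card {v \<in> permutations_of_set (A - {x}). P (x # v)})"
proof -
  have "{w \<in> permutations_of_set A. P w} = (\<Union>x\<in>A. (#) x ` {v \<in> permutations_of_set (A - {x}). P (x # v)})"
    using permutations_of_set_nonempty[OF assms(2)] by auto
  also have "card \<dots> = (\<Sum>x\<in>A. card ((#) x ` {v \<in> permutations_of_set (A - {x}). P (x # v)}))"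
    by (rule card_UN_disjoint) (auto simp: assms)
  also have "\<dots> = (\<Sum>x\<in>A. card {v \<in> permutations_of_set (A - {x}). P (x # v)})"
    by (intro sum.cong refl card_image) (auto simp: inj_on_def)
  finally show ?thesis .
qed

lemma card_ins: "finite F \<Longrightarrow> x \<notin> F \<Longrightarrow> card {y \<in> insert x F. P y} = card {y \<in> F. P y} + (if P x then 1 else 0)"
proof -
  assume a: "finite F" "x \<notin> F"
  show ?thesis
  proof (cases "P x")
    case True
    then have "{y \<in> insert x F. P y} = insert x {y \<in> F. P y}" by auto
    then show ?thesis using a True by simp
  next
    case False
    then have "{y \<in> insert x F. P y} = {y \<in> F. P y}" by auto
    then show ?thesis using False by simp
  qed
qed

lemma card_remove: "finite A \<Longrightarrow> x \<in> A \<Longrightarrow> card {y \<in> A - {x}. P y} = card {y \<in> A. P y} - (if P x then 1 else 0)"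
proof -
  assume a: "finite A" "x \<in> A"
  have "{y \<in> A - {x}. P y} = {y \<in> A. P y} - {x}" by auto
  then show ?thesis using a by (simp add: card_Diff_singleton_if)
qed

context fixes j k :: nat begin

definition lowv :: "nat \<Rightarrow> bool" where "lowv x \<longleftrightarrow> x + k \<le> j"
definition highv :: "nat \<Rightarrow> bool" where "highv x \<longleftrightarrow> j < x"

fun rok :: "nat list \<Rightarrow> bool" where
  "rok [] = True"
| "rok (x # v) = (lowv x \<or> (\<not> highv x \<and> rok v))"

definition CC :: "nat list \<Rightarrow> bool" where
  "CC w \<longleftrightarrow> (\<exists>xs ys. w = xs @ j # ys \<and> j \<notin> set xs \<and> rok (rev xs) \<and> rok ys)"

definition GS :: "nat list \<Rightarrow> bool" where
  "GS w \<longleftrightarrow> (\<exists>xs ys. w = xs @ j # ys \<and> j \<notin> set xs \<and> (\<forall>x\<in>set xs. \<not> lowv x \<and> \<not> highv x) \<and> rok ys)"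

lemma rok_append: "rok (u @ v) \<longleftrightarrow> rok u \<and> ((\<forall>x\<in>set u. \<not> lowv x \<and> \<not> highv x) \<longrightarrow> rok v)"
  by (induction u) auto

lemma low_not_high: "lowv x \<Longrightarrow> \<not> highv x"
  by (simp add: lowv_def highv_def)

lemma CC_split: "j \<notin> set xs \<Longrightarrow> j \<notin> set ys \<Longrightarrow> CC (xs @ j # ys) \<longleftrightarrow> rok (rev xs) \<and> rok ys"
  unfolding CC_def by (metis append_Cons_eq_iff)

lemma GS_split: "j \<notin> set xs \<Longrightarrow> j \<notin> set ys \<Longrightarrow> GS (xs @ j # ys) \<longleftrightarrow> (\<forall>x\<in>set xs. \<not> lowv x \<and> \<not> highv x) \<and> rok ys"
  unfolding GS_def by (metis append_Cons_eq_iff)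

lemma dist_split:
  assumes "distinct v" "j \<in> set v"
  obtains xs ys where "v = xs @ j # ys" "j \<notin> set xs" "j \<notin> set ys"
proof -
  obtain xs ys where v: "v = xs @ j # ys" using assms(2) split_list by metis
  then show ?thesis using that assms(1) by auto
qed

lemma CC_Cons_j: "distinct (j # v) \<Longrightarrow> CC (j # v) \<longleftrightarrow> rok v"
  using CC_split[of "[]" v] by simp

lemma GS_Cons_j: "distinct (j # v) \<Longrightarrow> GS (j # v) \<longleftrightarrow> rok v"
  using GS_split[of "[]" v] by simp

lemma CC_Cons:
  assumes "distinct (x # v)" "j \<in> set v"
  shows "CC (x # v) \<longleftrightarrow> (if highv x then CC v \<and> \<not> GS v else CC v)"
proof -
  obtain xs ys where v: "v = xs @ j # ys" "j \<notin> set xs" "j \<notin> set ys"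
    using dist_split[of v] assms by auto
  have xj: "x \<noteq> j" using assms by auto
  have "CC (x # v) = CC ((x # xs) @ j # ys)" using v by simp
  also have "\<dots> = (rok (rev xs @ [x]) \<and> rok ys)" using CC_split[of "x # xs" ys] v xj by simp
  finally show ?thesis using v rok_append[of "rev xs" "[x]"] CC_split[of xs ys] GS_split[of xs ys]
    by (auto dest: low_not_high)
qed

lemma GS_Cons:
  assumes "distinct (x # v)" "j \<in> set v"
  shows "GS (x # v) \<longleftrightarrow> \<not> lowv x \<and> \<not> highv x \<and> GS v"
proof -
  obtain xs ys where v: "v = xs @ j # ys" "j \<notin> set xs" "j \<notin> set ys"
    using dist_split[of v] assms by auto
  have xj: "x \<noteq> j" using assms by auto
  have "GS (x # v) = GS ((x # xs) @ j # ys)" using v by simp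
  then show ?thesis using v GS_split[of "x # xs" ys] GS_split[of xs ys] xj by auto
qed

lemma rok_allmid: "(\<forall>x\<in>set u. \<not> lowv x \<and> \<not> highv x) \<Longrightarrow> rok u"
  by (induction u) auto

lemma GS_CC: "GS v \<Longrightarrow> CC v"
  unfolding GS_def CC_def using rok_allmid[of "rev _"] by fastforce

definition lA :: "nat set \<Rightarrow> nat" where "lA A = card {x \<in> A. lowv x}"
definition hA :: "nat set \<Rightarrow> nat" where "hA A = card {x \<in> A. highv x}"
definition mA :: "nat set \<Rightarrow> nat" where "mA A = card {x \<in> A. \<not> lowv x \<and> \<not> highv x \<and> x \<noteq> j}"

lemma sum_classes:
  fixes f :: "nat \<Rightarrow> real"
  assumes k: "1 \<le> k" and "finite A"
    and "\<And>x. x \<in> A \<Longrightarrow> f x = (if lowv x then a else if highv x then b else if x = j then c else d)"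
  shows "sum f A = a * lA A + b * hA A + (if j \<in> A then c else 0) + d * mA A"
  using assms(2,3)
proof (induction A rule: finite_induct)
  case empty
  then show ?case by (simp add: lA_def hA_def mA_def)
next
  case (insert x F)
  have IH: "sum f F = a * lA F + b * hA F + (if j \<in> F then c else 0) + d * mA F"
    using insert by auto
  have fx: "f x = (if lowv x then a else if highv x then b else if x = j then c else d)" using insert by auto
  have lj: "\<not> lowv j" "\<not> highv j" using k by (auto simp: lowv_def highv_def)
  have c1: "lA (insert x F) = lA F + (if lowv x then 1 else 0)"
    unfolding lA_def by (rule card_ins[OF insert(1,2)])
  have c2: "hA (insert x F) = hA F + (if highv x then 1 else 0)"
    unfolding hA_def by (rule card_ins[OF insert(1,2)])
  have c3: "mA (insert x F) = mA F + (if \<not> lowv x \<and> \<not> highv x \<and> x \<noteq> j then 1 else 0)"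
    unfolding mA_def by (rule card_ins[OF insert(1,2)])
  show ?case
    using insert(1,2) IH fx lj low_not_high[of x] c1 c2 c3
    by (auto simp: algebra_simps)
qed

lemma card_split:
  assumes k: "1 \<le> k" and "finite A"
  shows "card A = lA A + hA A + mA A + (if j \<in> A then 1 else 0)"
proof -
  have "real (card A) = sum (\<lambda>_. 1::real) A" by simp
  also have "\<dots> = (1::real) * real (lA A) + 1 * real (hA A) + (if j \<in> A then 1 else 0) + 1 * real (mA A)"
    by (rule sum_classes) (use assms in auto)
  finally have "real (card A) = real (lA A + hA A + mA A + (if j \<in> A then 1 else 0))" by simp
  then show ?thesis by linarith
qed

definition NR :: "nat set \<Rightarrow> nat" where "NR A = card {v \<in> permutations_of_set A. rok v}"

lemma NR_formula:
  assumes k: "1 \<le> k"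
  shows "finite A \<Longrightarrow> j \<notin> A \<Longrightarrow> real (NR A) = fact (card A) * cN (lA A) (lA A + hA A)"
proof (induction "card A" arbitrary: A rule: less_induct)
  case less
  show ?case
  proof (cases "A = {}")
    case True
    have "{v \<in> permutations_of_set {}. rok v} = {[]}" by auto
    then show ?thesis using True by (simp add: NR_def lA_def hA_def cN_def)
  next
    case False
    define N where "N = card A"
    have N0: "N > 0" using False less(2) unfolding N_def by auto
    have "real (NR A) = (\<Sum>x\<in>A. real (card {v \<in> permutations_of_set (A - {x}). rok (x # v)}))"
      unfolding NR_def card_perm_filter[OF less(2) False] by simp
    also have "\<dots> = (fact (N-1)::real) * real (lA A) + 0 * real (hA A) + (if j \<in> A then 0 else 0) + (fact (N-1) * cN (lA A) (lA A + hA A)) * real (mA A)"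
    proof (rule sum_classes[OF k less(2)])
      fix x assume x: "x \<in> A"
      have cA: "card (A - {x}) = N - 1" using x less(2) unfolding N_def by simp
      show "real (card {v \<in> permutations_of_set (A - {x}). rok (x # v)}) =
        (if lowv x then fact (N-1) else if highv x then 0 else if x = j then 0 else fact (N-1) * cN (lA A) (lA A + hA A))"
      proof (cases "lowv x")
        case True
        then have "{v \<in> permutations_of_set (A - {x}). rok (x # v)} = permutations_of_set (A - {x})" by auto
        then show ?thesis using True cA less(2) by (simp add: of_nat_fact)
      next
        case nl: False
        show ?thesis
        proof (cases "highv x")
          case True
          then have "{v \<in> permutations_of_set (A - {x}). rok (x # v)} = {}" using nl by auto
          then show ?thesis using True nl by simp
        next
          case nh: False
          have e: "{v \<in> permutations_of_set (A - {x}). rok (x # v)} = {v \<in> permutations_of_set (A - {x}). rok v}"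
            using nl nh by auto
          have "real (NR (A - {x})) = fact (card (A - {x})) * cN (lA (A - {x})) (lA (A - {x}) + hA (A - {x}))"
          proof (rule less(1))
            show "card (A - {x}) < card A" using x less(2) by (rule card_Diff1_less[rotated])
          qed (use less(2,3) in auto)
          moreover have "lA (A - {x}) = lA A" "hA (A - {x}) = hA A"
          proof -
            have "lA (A - {x}) = lA A - (if lowv x then 1 else 0)"
              unfolding lA_def by (rule card_remove[OF less(2) x])
            then show "lA (A - {x}) = lA A" using nl by simp
            have "hA (A - {x}) = hA A - (if highv x then 1 else 0)"
              unfolding hA_def by (rule card_remove[OF less(2) x])
            then show "hA (A - {x}) = hA A" using nh by simp
          qed
          moreover have "x \<noteq> j" using x less(3) by auto
          ultimately show ?thesis using e nl nh cA unfolding NR_def by simp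
        qed
      qed
    qed
    also have "\<dots> = fact (N - 1) * (real (lA A) + real (mA A) * cN (lA A) (lA A + hA A))"
      using less(3) by (simp add: algebra_simps)
    also have "\<dots> = fact (N - 1) * (real (lA A + hA A + mA A) * cN (lA A) (lA A + hA A))"
      using idN[of "lA A" "hA A" "mA A"] by simp
    also have "\<dots> = fact N * cN (lA A) (lA A + hA A)"
    proof -
      have "N = lA A + hA A + mA A" using card_split[OF k less(2)] less(3) unfolding N_def by simp
      moreover have "(fact N :: real) = real N * fact (N - 1)" using N0 fact_reduce by blast
      ultimately show ?thesis by simp
    qed
    finally show ?thesis unfolding N_def .
  qed
qed

definition GG :: "nat set \<Rightarrow> nat" where "GG A = card {v \<in> permutations_of_set A. GS v}"
definition FF :: "nat set \<Rightarrow> nat" where "FF A = card {v \<in> permutations_of_set A. CC v}"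

lemma perm_rem: "v \<in> permutations_of_set (A - {x}) \<Longrightarrow> x \<in> A \<Longrightarrow> distinct (x # v) \<and> set v = A - {x}"
  by (auto simp: permutations_of_set_def)

lemma lh_remove:
  assumes "finite A" "x \<in> A"
  shows "lA (A - {x}) = lA A - (if lowv x then 1 else 0)" "hA (A - {x}) = hA A - (if highv x then 1 else 0)"
  unfolding lA_def hA_def by (rule card_remove[OF assms])+

lemma lA_pos: "finite A \<Longrightarrow> x \<in> A \<Longrightarrow> lowv x \<Longrightarrow> lA A \<ge> 1"
proof -
  assume a: "finite A" "x \<in> A" "lowv x"
  then have "{y \<in> A. lowv y} \<noteq> {}" "finite {y \<in> A. lowv y}" by auto
  then show ?thesis unfolding lA_def by (simp add: Suc_le_eq card_gt_0_iff)
qed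

lemma hA_pos: "finite A \<Longrightarrow> x \<in> A \<Longrightarrow> highv x \<Longrightarrow> hA A \<ge> 1"
proof -
  assume a: "finite A" "x \<in> A" "highv x"
  then have "{y \<in> A. highv y} \<noteq> {}" "finite {y \<in> A. highv y}" by auto
  then show ?thesis unfolding hA_def by (simp add: Suc_le_eq card_gt_0_iff)
qed

lemma GG_formula:
  assumes k: "1 \<le> k"
  shows "finite A \<Longrightarrow> j \<in> A \<Longrightarrow> real (GG A) = fact (card A) * cG (lA A) (lA A + hA A)"
proof (induction "card A" arbitrary: A rule: less_induct)
  case less
  have False0: "A \<noteq> {}" using less(3) by auto
  define N where "N = card A"
  have N0: "N > 0" using False0 less(2) unfolding N_def by auto
  have lj: "\<not> lowv j" "\<not> highv j" using k by (auto simp: lowv_def highv_def)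
  have "real (GG A) = (\<Sum>x\<in>A. real (card {v \<in> permutations_of_set (A - {x}). GS (x # v)}))"
    unfolding GG_def card_perm_filter[OF less(2) False0] by simp
  also have "\<dots> = (0::real) * real (lA A) + 0 * real (hA A) + (if j \<in> A then fact (N-1) * cN (lA A) (lA A + hA A) else 0)
      + (fact (N-1) * cG (lA A) (lA A + hA A)) * real (mA A)"
  proof (rule sum_classes[OF k less(2)])
    fix x assume x: "x \<in> A"
    have cA: "card (A - {x}) = N - 1" using x less(2) unfolding N_def by simp
    have lhx: "lA (A - {x}) = lA A - (if lowv x then 1 else 0)" "hA (A - {x}) = hA A - (if highv x then 1 else 0)"
      using lh_remove[OF less(2) x] by auto
    show "real (card {v \<in> permutations_of_set (A - {x}). GS (x # v)}) =
        (if lowv x then 0 else if highv x then 0 else if x = j then fact (N-1) * cN (lA A) (lA A + hA A)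
         else fact (N-1) * cG (lA A) (lA A + hA A))"
    proof (cases "x = j")
      case True
      have e: "{v \<in> permutations_of_set (A - {x}). GS (x # v)} = {v \<in> permutations_of_set (A - {x}). rok v}"
      proof (intro Collect_cong conj_cong refl)
        fix v assume "v \<in> permutations_of_set (A - {x})"
        then show "GS (x # v) = rok v" using GS_Cons_j perm_rem[OF _ x] True by blast
      qed
      have "real (NR (A - {x})) = fact (card (A - {x})) * cN (lA (A - {x})) (lA (A - {x}) + hA (A - {x}))"
        by (rule NR_formula[OF k]) (use less(2) True in auto)
      then show ?thesis using e lj True lhx cA unfolding NR_def by simp
    next
      case xj: False
      have jv: "\<And>v. v \<in> permutations_of_set (A - {x}) \<Longrightarrow> j \<in> set v" using perm_rem[OF _ x] xj less(3) by blast
      have e: "{v \<in> permutations_of_set (A - {x}). GS (x # v)} = {v \<in> permutations_of_set (A - {x}). \<not> lowv x \<and> \<not> highv x \<and> GS v}"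
      proof (intro Collect_cong conj_cong refl)
        fix v assume v: "v \<in> permutations_of_set (A - {x})"
        show "GS (x # v) = (\<not> lowv x \<and> \<not> highv x \<and> GS v)" using GS_Cons perm_rem[OF v x] jv[OF v] by blast
      qed
      show ?thesis
      proof (cases "lowv x \<or> highv x")
        case True
        then show ?thesis using e by auto
      next
        case False
        have "real (GG (A - {x})) = fact (card (A - {x})) * cG (lA (A - {x})) (lA (A - {x}) + hA (A - {x}))"
        proof (rule less(1))
          show "card (A - {x}) < card A" using x less(2) by (rule card_Diff1_less[rotated])
        qed (use less(2,3) xj in auto)
        then show ?thesis using e False lhx cA xj unfolding GG_def by simp
      qed
    qed
  qed
  also have "\<dots> = fact (N - 1) * (cN (lA A) (lA A + hA A) + real (mA A) * cG (lA A) (lA A + hA A))"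
    using less(3) by (simp add: algebra_simps)
  also have "\<dots> = fact (N - 1) * (real (lA A + hA A + mA A + 1) * cG (lA A) (lA A + hA A))"
    using idG[of "lA A" "hA A" "mA A"] by simp
  also have "\<dots> = fact N * cG (lA A) (lA A + hA A)"
  proof -
    have "N = lA A + hA A + mA A + 1" using card_split[OF k less(2)] less(3) unfolding N_def by simp
    moreover have "(fact N :: real) = real N * fact (N - 1)" using N0 fact_reduce by blast
    ultimately show ?thesis by simp
  qed
  finally show ?case unfolding N_def .
qed

lemma FF_formula:
  assumes k: "1 \<le> k"
  shows "finite A \<Longrightarrow> j \<in> A \<Longrightarrow> real (FF A) = fact (card A) * cF (lA A) (lA A + hA A)"
proof (induction "card A" arbitrary: A rule: less_induct)
  case less
  have False0: "A \<noteq> {}" using less(3) by auto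
  define N where "N = card A"
  define l where "l = lA A"
  define h where "h = hA A"
  have N0: "N > 0" using False0 less(2) unfolding N_def by auto
  have lj: "\<not> lowv j" "\<not> highv j" using k by (auto simp: lowv_def highv_def)
  have "real (FF A) = (\<Sum>x\<in>A. real (card {v \<in> permutations_of_set (A - {x}). CC (x # v)}))"
    unfolding FF_def card_perm_filter[OF less(2) False0] by simp
  also have "\<dots> = (fact (N-1) * cF (l-1) (l+h-1)) * real l + (fact (N-1) * (cF l (l+h-1) - cG l (l+h-1))) * real h
      + (if j \<in> A then fact (N-1) * cN l (l+h) else 0)
      + (fact (N-1) * cF l (l+h)) * real (mA A)"
    unfolding l_def h_def
  proof (rule sum_classes[OF k less(2)])
    fix x assume x: "x \<in> A"
    have cA: "card (A - {x}) = N - 1" using x less(2) unfolding N_def by simp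
    have lhx: "lA (A - {x}) = lA A - (if lowv x then 1 else 0)" "hA (A - {x}) = hA A - (if highv x then 1 else 0)"
      using lh_remove[OF less(2) x] by auto
    have ltA: "card (A - {x}) < card A" using x less(2) by (rule card_Diff1_less[rotated])
    show "real (card {v \<in> permutations_of_set (A - {x}). CC (x # v)}) =
        (if lowv x then fact (N-1) * cF (lA A-1) (lA A+hA A-1)
         else if highv x then fact (N-1) * (cF (lA A) (lA A+hA A-1) - cG (lA A) (lA A+hA A-1))
         else if x = j then fact (N-1) * cN (lA A) (lA A + hA A)
         else fact (N-1) * cF (lA A) (lA A + hA A))"
    proof (cases "x = j")
      case True
      have e: "{v \<in> permutations_of_set (A - {x}). CC (x # v)} = {v \<in> permutations_of_set (A - {x}). rok v}"
      proof (intro Collect_cong conj_cong refl)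
        fix v assume "v \<in> permutations_of_set (A - {x})"
        then show "CC (x # v) = rok v" using CC_Cons_j perm_rem[OF _ x] True by blast
      qed
      have "real (NR (A - {x})) = fact (card (A - {x})) * cN (lA (A - {x})) (lA (A - {x}) + hA (A - {x}))"
        by (rule NR_formula[OF k]) (use less(2) True in auto)
      then show ?thesis using e lj True lhx cA unfolding NR_def by simp
    next
      case xj: False
      have jv: "\<And>v. v \<in> permutations_of_set (A - {x}) \<Longrightarrow> j \<in> set v" using perm_rem[OF _ x] xj less(3) by blast
      have e: "{v \<in> permutations_of_set (A - {x}). CC (x # v)} = {v \<in> permutations_of_set (A - {x}). if highv x then CC v \<and> \<not> GS v else CC v}"
      proof (intro Collect_cong conj_cong refl)
        fix v assume v: "v \<in> permutations_of_set (A - {x})"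
        show "CC (x # v) = (if highv x then CC v \<and> \<not> GS v else CC v)" using CC_Cons perm_rem[OF v x] jv[OF v] by blast
      qed
      have IHF: "real (FF (A - {x})) = fact (card (A - {x})) * cF (lA (A - {x})) (lA (A - {x}) + hA (A - {x}))"
        by (rule less(1)[OF ltA]) (use less(2,3) xj in auto)
      show ?thesis
      proof (cases "highv x")
        case True
        have nl: "\<not> lowv x" using True low_not_high by blast
        have sub: "{v \<in> permutations_of_set (A - {x}). GS v} \<subseteq> {v \<in> permutations_of_set (A - {x}). CC v}"
          using GS_CC by blast
        have e2: "{v \<in> permutations_of_set (A - {x}). CC v \<and> \<not> GS v} =
            {v \<in> permutations_of_set (A - {x}). CC v} - {v \<in> permutations_of_set (A - {x}). GS v}" by blast
        have "real (card {v \<in> permutations_of_set (A - {x}). CC v \<and> \<not> GS v}) = real (FF (A - {x})) - real (GG (A - {x}))"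
          unfolding FF_def GG_def e2 using sub by (simp add: card_Diff_subset card_mono of_nat_diff)
        moreover have "real (GG (A - {x})) = fact (card (A - {x})) * cG (lA (A - {x})) (lA (A - {x}) + hA (A - {x}))"
          by (rule GG_formula[OF k]) (use less(2,3) xj in auto)
        moreover have "hA A \<ge> 1" using hA_pos less(2) x True by blast
        ultimately show ?thesis using e True nl IHF lhx cA by (simp add: algebra_simps)
      next
        case nh: False
        show ?thesis
        proof (cases "lowv x")
          case True
          have "lA A \<ge> 1" using lA_pos less(2) x True by blast
          then show ?thesis using e True nh IHF lhx cA unfolding FF_def by simp
        next
          case False
          then show ?thesis using e False nh IHF lhx cA xj unfolding FF_def by simp
        qed
      qed
    qed
  qed
  also have "\<dots> = fact (N - 1) * (cN l (l+h) + real l * cF (l-1) (l+h-1) + real (mA A) * cF l (l+h) + real h * (cF l (l+h-1) - cG l (l+h-1)))"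
    using less(3) by (simp add: algebra_simps)
  also have "\<dots> = fact (N - 1) * (real (l + h + mA A + 1) * cF l (l+h))"
    using idF[of l h "mA A"] by simp
  also have "\<dots> = fact N * cF l (l+h)"
  proof -
    have "N = l + h + mA A + 1" using card_split[OF k less(2)] less(3) unfolding N_def l_def h_def by simp
    moreover have "(fact N :: real) = real N * fact (N - 1)" using N0 fact_reduce by blast
    ultimately show ?thesis by simp
  qed
  finally show ?case unfolding N_def l_def h_def .
qed

end


lemma asc_D:
  assumes "k_ascending w k s t"
  shows "s < t" "t < length w" "\<And>r. s \<le> r \<Longrightarrow> r \<le> t \<Longrightarrow> w!s \<le> w!r \<and> w!r \<le> w!t"
    "w!s + k \<le> w!t" "\<And>a b. s \<le> a \<Longrightarrow> a < b \<Longrightarrow> b \<le> t \<Longrightarrow> w!a < w!b + k"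
proof -
  note d = assms[unfolded k_ascending_def]
  show "s < t" "t < length w" "w!s + k \<le> w!t" using d by auto
  fix r assume r: "s \<le> r" "r \<le> t"
  have "Min ((!) w ` {s..t}) \<le> w!r" "w!r \<le> Max ((!) w ` {s..t})" using r by auto
  then show "w!s \<le> w!r \<and> w!r \<le> w!t" using d by auto
next
  fix a b assume ab: "s \<le> a" "a < b" "b \<le> t"
  note d = assms[unfolded k_ascending_def]
  then have "\<not> k_down w k a b" using ab unfolding k_down_in_def by blast
  then show "w!a < w!b + k" using ab d unfolding k_down_def by auto
qed

lemma asc_I:
  assumes "s < t" "t < length w" "\<And>r. s \<le> r \<Longrightarrow> r \<le> t \<Longrightarrow> w!s \<le> w!r \<and> w!r \<le> w!t"
    "w!s + k \<le> w!t" "\<And>a b. s \<le> a \<Longrightarrow> a < b \<Longrightarrow> b \<le> t \<Longrightarrow> w!a < w!b + k"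
  shows "k_ascending w k s t"
proof -
  have "Min ((!) w ` {s..t}) = w!s" by (rule Min_eqI) (use assms(1,3) in auto)
  moreover have "Max ((!) w ` {s..t}) = w!t" by (rule Max_eqI) (use assms(1,3) in auto)
  moreover have "\<not> k_down_in w k s t"
    unfolding k_down_in_def k_down_def using assms(5) by fastforce
  ultimately show ?thesis unfolding k_ascending_def using assms by auto
qed

lemma desc_D:
  assumes "k_descending w k s t"
  shows "s < t" "t < length w" "\<And>r. s \<le> r \<Longrightarrow> r \<le> t \<Longrightarrow> w!t \<le> w!r \<and> w!r \<le> w!s"
    "w!t + k \<le> w!s" "\<And>a b. s \<le> a \<Longrightarrow> a < b \<Longrightarrow> b \<le> t \<Longrightarrow> w!b < w!a + k"
proof -
  note d = assms[unfolded k_descending_def]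
  show "s < t" "t < length w" "w!t + k \<le> w!s" using d by auto
  fix r assume r: "s \<le> r" "r \<le> t"
  have "Min ((!) w ` {s..t}) \<le> w!r" "w!r \<le> Max ((!) w ` {s..t})" using r by auto
  then show "w!t \<le> w!r \<and> w!r \<le> w!s" using d by auto
next
  fix a b assume ab: "s \<le> a" "a < b" "b \<le> t"
  note d = assms[unfolded k_descending_def]
  then have "\<not> k_up w k a b" using ab unfolding k_up_in_def by blast
  then show "w!b < w!a + k" using ab d unfolding k_up_def by auto
qed

lemma desc_I:
  assumes "s < t" "t < length w" "\<And>r. s \<le> r \<Longrightarrow> r \<le> t \<Longrightarrow> w!t \<le> w!r \<and> w!r \<le> w!s"
    "w!t + k \<le> w!s" "\<And>a b. s \<le> a \<Longrightarrow> a < b \<Longrightarrow> b \<le> t \<Longrightarrow> w!b < w!a + k"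
  shows "k_descending w k s t"
proof -
  have "Min ((!) w ` {s..t}) = w!t" by (rule Min_eqI) (use assms(1,3) in auto)
  moreover have "Max ((!) w ` {s..t}) = w!s" by (rule Max_eqI) (use assms(1,3) in auto)
  moreover have "\<not> k_up_in w k s t"
    unfolding k_up_in_def k_up_def using assms(5) by fastforce
  ultimately show ?thesis unfolding k_descending_def using assms by auto
qed


definition Lc :: "nat \<Rightarrow> nat \<Rightarrow> nat list \<Rightarrow> nat \<Rightarrow> bool" where
  "Lc j k w i \<longleftrightarrow> (\<forall>p<i. j < w!p \<longrightarrow> (\<exists>q. p < q \<and> q < i \<and> w!q + k \<le> j))"
definition Rc :: "nat \<Rightarrow> nat \<Rightarrow> nat list \<Rightarrow> nat \<Rightarrow> bool" where
  "Rc j k w i \<longleftrightarrow> (\<forall>p. i < p \<longrightarrow> p < length w \<longrightarrow> j < w!p \<longrightarrow> (\<exists>q. i < q \<and> q < p \<and> w!q + k \<le> j))"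

lemma peak_fwd_asc:
  assumes dist: "distinct w" and i: "i < length w" "w!i = j" and k: "1 \<le> k"
    and m: "max_k_ascending w k s i"
  shows "Lc j k w i \<and> Rc j k w i \<and> (\<exists>p<length w. w!p + k \<le> j)"
proof -
  have A: "k_ascending w k s i" using m unfolding max_k_ascending_def by auto
  note a = asc_D[OF A]
  have lowexists: "\<exists>p<length w. w!p + k \<le> j" using a(1,2,4) i by (intro exI[of _ s]) auto
  have L: "Lc j k w i"
    unfolding Lc_def
  proof (intro allI impI)
    fix p assume p: "p < i" "j < w!p"
    have "\<not> s \<le> p" using a(3)[of p] p i by fastforce
    then show "\<exists>q>p. q < i \<and> w!q + k \<le> j" using a(1,4) i by (intro exI[of _ s]) auto
  qed
  have R: "Rc j k w i"
  proof (rule ccontr)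
    assume "\<not> Rc j k w i"
    then have ex: "\<exists>p. i < p \<and> p < length w \<and> j < w!p \<and> \<not> (\<exists>q. i < q \<and> q < p \<and> w!q + k \<le> j)"
      unfolding Rc_def by blast
    then obtain p0 where p0: "i < p0 \<and> p0 < length w \<and> j < w!p0 \<and> \<not> (\<exists>q. i < q \<and> q < p0 \<and> w!q + k \<le> j)"
      and least: "\<And>m. m < p0 \<Longrightarrow> \<not> (i < m \<and> m < length w \<and> j < w!m \<and> \<not> (\<exists>q. i < q \<and> q < m \<and> w!q + k \<le> j))"
      using exists_least_iff[THEN iffD1, OF ex] by blast
    have mid: "\<And>r. i < r \<Longrightarrow> r < p0 \<Longrightarrow> \<not> w!r + k \<le> j \<and> w!r \<le> j"
    proof -
      fix r assume r: "i < r" "r < p0"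
      have nl: "\<not> w!r + k \<le> j" using p0 r by blast
      have "\<not> j < w!r"
      proof
        assume "j < w!r"
        then show False using least[OF r(2)] r p0 by auto
      qed
      then show "\<not> w!r + k \<le> j \<and> w!r \<le> j" using nl by simp
    qed
    have le_j: "\<And>r. s \<le> r \<Longrightarrow> r < p0 \<Longrightarrow> w!r \<le> j"
    proof -
      fix r assume r: "s \<le> r" "r < p0"
      show "w!r \<le> j"
      proof (cases "r \<le> i")
        case True then show ?thesis using a(3)[of r] r i by auto
      next
        case False then show ?thesis using mid[of r] r by auto
      qed
    qed
    have "k_ascending w k s p0"
    proof (rule asc_I)
      show "s < p0" using a(1) p0 by auto
      show "p0 < length w" using p0 by auto
      show "w!s + k \<le> w!p0" using a(4) i p0 by auto
      fix r assume r: "s \<le> r" "r \<le> p0"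
      show "w!s \<le> w!r \<and> w!r \<le> w!p0"
      proof (cases "r \<le> i")
        case True then show ?thesis using a(3)[of r] r i p0 by auto
      next
        case False
        show ?thesis
        proof (cases "r = p0")
          case True then show ?thesis using a(4) i p0 by auto
        next
          case False
          then have m1: "\<not> w!r + k \<le> j" "w!r \<le> j" using mid[of r] \<open>\<not> r \<le> i\<close> r by auto
          then show ?thesis using a(4) i p0 by auto
        qed
      qed
    next
      fix x y assume xy: "s \<le> x" "x < y" "y \<le> p0"
      show "w!x < w!y + k"
      proof (cases "y \<le> i")
        case True then show ?thesis using a(5)[of x y] xy by auto
      next
        case False
        have "w!x \<le> j" using le_j[of x] xy by auto
        moreover have "j < w!y + k"
        proof (cases "y = p0")
          case True then show ?thesis using p0 by auto
        next
          case False then show ?thesis using mid[of y] xy \<open>\<not> y \<le> i\<close> by auto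
        qed
        ultimately show ?thesis by auto
      qed
    qed
    moreover have "(s, p0) \<noteq> (s, i)" "i \<le> p0" using p0 by auto
    ultimately show False using m unfolding max_k_ascending_def by blast
  qed
  show ?thesis using L R lowexists by blast
qed


lemma peak_fwd_desc:
  assumes dist: "distinct w" and i: "i < length w" "w!i = j" and k: "1 \<le> k"
    and m: "max_k_descending w k i t"
  shows "Lc j k w i \<and> Rc j k w i \<and> (\<exists>p<length w. w!p + k \<le> j)"
proof -
  have D: "k_descending w k i t" using m unfolding max_k_descending_def by auto
  note a = desc_D[OF D]
  have lowexists: "\<exists>p<length w. w!p + k \<le> j" using a(1,2,4) i by (intro exI[of _ t]) auto
  have R: "Rc j k w i"
    unfolding Rc_def
  proof (intro allI impI)
    fix p assume p: "i < p" "p < length w" "j < w!p"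
    have "\<not> p \<le> t" using a(3)[of p] p i by fastforce
    then show "\<exists>q>i. q < p \<and> w!q + k \<le> j" using a(1,4) i by (intro exI[of _ t]) auto
  qed
  have L: "Lc j k w i"
  proof (rule ccontr)
    assume "\<not> Lc j k w i"
    then obtain p where p: "p < i \<and> j < w!p \<and> \<not> (\<exists>q. p < q \<and> q < i \<and> w!q + k \<le> j)"
      unfolding Lc_def by blast
    obtain p0 where p0: "p0 < i \<and> j < w!p0 \<and> \<not> (\<exists>q. p0 < q \<and> q < i \<and> w!q + k \<le> j)"
      and greatest: "\<And>y. y < i \<and> j < w!y \<and> \<not> (\<exists>q. y < q \<and> q < i \<and> w!q + k \<le> j) \<Longrightarrow> y \<le> p0"
      using Nat.ex_has_greatest_nat[of "\<lambda>p. p < i \<and> j < w!p \<and> \<not> (\<exists>q. p < q \<and> q < i \<and> w!q + k \<le> j)" p i, OF p]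
      by auto
    have mid: "\<And>r. p0 < r \<Longrightarrow> r < i \<Longrightarrow> \<not> w!r + k \<le> j \<and> w!r \<le> j"
    proof -
      fix r assume r: "p0 < r" "r < i"
      have nl: "\<not> w!r + k \<le> j" using p0 r by blast
      have "\<not> j < w!r"
      proof
        assume "j < w!r"
        then have "r \<le> p0" using r p0 by (intro greatest) auto
        then show False using r by auto
      qed
      then show "\<not> w!r + k \<le> j \<and> w!r \<le> j" using nl by simp
    qed
    have le_j: "\<And>r. p0 < r \<Longrightarrow> r \<le> t \<Longrightarrow> w!r \<le> j"
    proof -
      fix r assume r: "p0 < r" "r \<le> t"
      show "w!r \<le> j"
      proof (cases "i \<le> r")
        case True then show ?thesis using a(3)[of r] r i by auto
      next
        case False then show ?thesis using mid[of r] r by auto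
      qed
    qed
    have "k_descending w k p0 t"
    proof (rule desc_I)
      show "p0 < t" using a(1) p0 by auto
      show "t < length w" using a(2) by auto
      show "w!t + k \<le> w!p0" using a(4) i p0 by auto
      fix r assume r: "p0 \<le> r" "r \<le> t"
      show "w!t \<le> w!r \<and> w!r \<le> w!p0"
      proof (cases "i \<le> r")
        case True then show ?thesis using a(3)[of r] r i p0 by auto
      next
        case False
        show ?thesis
        proof (cases "r = p0")
          case True then show ?thesis using a(4) i p0 by auto
        next
          case False
          then have m1: "\<not> w!r + k \<le> j" "w!r \<le> j" using mid[of r] \<open>\<not> i \<le> r\<close> r by auto
          then show ?thesis using a(4) i p0 by auto
        qed
      qed
    next
      fix x y assume xy: "p0 \<le> x" "x < y" "y \<le> t"
      show "w!y < w!x + k"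
      proof (cases "i \<le> x")
        case True then show ?thesis using a(5)[of x y] xy by auto
      next
        case False
        have "w!y \<le> j" using le_j[of y] xy by auto
        moreover have "j < w!x + k"
        proof (cases "x = p0")
          case True then show ?thesis using p0 by auto
        next
          case False then show ?thesis using mid[of x] xy \<open>\<not> i \<le> x\<close> by auto
        qed
        ultimately show ?thesis by auto
      qed
    qed
    moreover have "(p0, t) \<noteq> (i, t)" "p0 \<le> i" using p0 by auto
    ultimately show False using m unfolding max_k_descending_def by blast
  qed
  show ?thesis using L R lowexists by blast
qed


lemma peak_bwd:
  assumes dist: "distinct w" and i: "i < length w" "w!i = j" and k: "1 \<le> k"
    and L: "Lc j k w i" and R: "Rc j k w i" and lowex: "\<exists>p<length w. w!p + k \<le> j"
  shows "k_peak_pos w k i"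
proof -
  have neqj: "\<And>p. p < length w \<Longrightarrow> p \<noteq> i \<Longrightarrow> w!p \<noteq> j"
    using dist i by (metis nth_eq_iff_index_eq)
  show ?thesis
  proof (cases "\<exists>p<i. w!p + k \<le> j")
    case True
    then obtain p where p: "p < i \<and> w!p + k \<le> j" by blast
    obtain p0 where p0: "p0 < i \<and> w!p0 + k \<le> j"
      and greatest: "\<And>y. y < i \<and> w!y + k \<le> j \<Longrightarrow> y \<le> p0"
      using Nat.ex_has_greatest_nat[of "\<lambda>p. p < i \<and> w!p + k \<le> j" p i, OF p] by auto
    have mid: "\<And>r. p0 < r \<Longrightarrow> r < i \<Longrightarrow> \<not> w!r + k \<le> j \<and> w!r \<le> j"
    proof -
      fix r assume r: "p0 < r" "r < i"
      have nl: "\<not> w!r + k \<le> j"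
      proof
        assume "w!r + k \<le> j"
        then have "r \<le> p0" using r by (intro greatest) auto
        then show False using r by auto
      qed
      have "\<not> j < w!r"
      proof
        assume "j < w!r"
        then obtain q where q: "r < q" "q < i" "w!q + k \<le> j" using L r unfolding Lc_def by blast
        then have "q \<le> p0" by (intro greatest) auto
        then show False using r q by auto
      qed
      then show "\<not> w!r + k \<le> j \<and> w!r \<le> j" using nl by simp
    qed
    have asc0: "k_ascending w k p0 i"
    proof (rule asc_I)
      show "p0 < i" using p0 by auto
      show "i < length w" using i by auto
      show "w!p0 + k \<le> w!i" using p0 i by auto
      fix r assume r: "p0 \<le> r" "r \<le> i"
      show "w!p0 \<le> w!r \<and> w!r \<le> w!i"
      proof (cases "r = p0 \<or> r = i")
        case True then show ?thesis using p0 i by auto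
      next
        case False
        then have "\<not> w!r + k \<le> j" "w!r \<le> j" using mid[of r] r by auto
        then show ?thesis using p0 i by auto
      qed
    next
      fix x y assume xy: "p0 \<le> x" "x < y" "y \<le> i"
      have "w!x \<le> j"
      proof (cases "x = p0")
        case True then show ?thesis using p0 by auto
      next
        case False then show ?thesis using mid[of x] xy by auto
      qed
      moreover have "j < w!y + k"
      proof (cases "y = i")
        case True then show ?thesis using i k by auto
      next
        case False then show ?thesis using mid[of y] xy by auto
      qed
      ultimately show "w!x < w!y + k" by auto
    qed
    then have ex: "\<exists>s. k_ascending w k s i" by blast
    obtain s0 where s0: "k_ascending w k s0 i" and least: "\<And>m. m < s0 \<Longrightarrow> \<not> k_ascending w k m i"
      using exists_least_iff[THEN iffD1, OF ex] by blast
    have "max_k_ascending w k s0 i"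
      unfolding max_k_ascending_def
    proof (intro conjI s0 notI)
      assume "\<exists>i' j'. i' \<le> s0 \<and> i \<le> j' \<and> (i', j') \<noteq> (s0, i) \<and> k_ascending w k i' j'"
      then obtain a b where ab: "a \<le> s0" "i \<le> b" "(a, b) \<noteq> (s0, i)" "k_ascending w k a b" by blast
      note ad = asc_D[OF ab(4)]
      show False
      proof (cases "b = i")
        case True
        then have "a < s0" using ab by auto
        then show False using least ab(4) True by blast
      next
        case False
        have si: "s0 < i" using asc_D(1)[OF s0] .
        have "w!i \<le> w!b" using ad(3)[of i] ab si by auto
        moreover have "w!b \<noteq> j" using neqj[of b] ad(2) False by auto
        ultimately have hb: "j < w!b" using i by auto
        have ib: "i < b" using ab(2) False by auto
        obtain q where q: "i < q" "q < b" "w!q + k \<le> j" using R[unfolded Rc_def, rule_format, OF ib ad(2) hb] by blast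
        have "w!i < w!q + k" using ad(5)[of i q] ab si q by auto
        then show False using q i by auto
      qed
    qed
    then show ?thesis unfolding k_peak_pos_def by blast
  next
    case False
    then have nohigh: "\<And>p. p < i \<Longrightarrow> \<not> j < w!p"
      using L unfolding Lc_def by (meson order.strict_trans)
    obtain p1 where p1: "p1 < length w" "w!p1 + k \<le> j" using lowex by blast
    have "p1 \<noteq> i" using p1 i k by auto
    then have "i < p1" using False p1 by (meson linorder_neqE_nat)
    then have ex: "\<exists>q. i < q \<and> q < length w \<and> w!q + k \<le> j" using p1 by blast
    obtain q0 where q0: "i < q0 \<and> q0 < length w \<and> w!q0 + k \<le> j"
      and least: "\<And>m. m < q0 \<Longrightarrow> \<not> (i < m \<and> m < length w \<and> w!m + k \<le> j)"
      using exists_least_iff[THEN iffD1, OF ex] by blast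
    have mid: "\<And>r. i < r \<Longrightarrow> r < q0 \<Longrightarrow> \<not> w!r + k \<le> j \<and> w!r \<le> j"
    proof -
      fix r assume r: "i < r" "r < q0"
      have nl: "\<not> w!r + k \<le> j" using least[of r] r q0 by auto
      have "\<not> j < w!r"
      proof
        assume "j < w!r"
        then obtain q where q: "i < q" "q < r" "w!q + k \<le> j" using R r q0 unfolding Rc_def by force
        then show False using least[of q] r q0 by auto
      qed
      then show "\<not> w!r + k \<le> j \<and> w!r \<le> j" using nl by simp
    qed
    have desc0: "k_descending w k i q0"
    proof (rule desc_I)
      show "i < q0" "q0 < length w" using q0 by auto
      show "w!q0 + k \<le> w!i" using q0 i by auto
      fix r assume r: "i \<le> r" "r \<le> q0"
      show "w!q0 \<le> w!r \<and> w!r \<le> w!i"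
      proof (cases "r = q0 \<or> r = i")
        case True then show ?thesis using q0 i by auto
      next
        case False
        then have "\<not> w!r + k \<le> j" "w!r \<le> j" using mid[of r] r by auto
        then show ?thesis using q0 i by auto
      qed
    next
      fix x y assume xy: "i \<le> x" "x < y" "y \<le> q0"
      have "w!y \<le> j"
      proof (cases "y = q0")
        case True then show ?thesis using q0 by auto
      next
        case False then show ?thesis using mid[of y] xy by auto
      qed
      moreover have "j < w!x + k"
      proof (cases "x = i")
        case True then show ?thesis using i k by auto
      next
        case False then show ?thesis using mid[of x] xy by auto
      qed
      ultimately show "w!y < w!x + k" by auto
    qed
    obtain t0 where t0: "k_descending w k i t0"
      and greatest: "\<And>y. k_descending w k i y \<Longrightarrow> y \<le> t0"
      using Nat.ex_has_greatest_nat[of "\<lambda>t. k_descending w k i t" q0 "length w", OF desc0]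
        desc_D(2) by (metis less_imp_le)
    have "max_k_descending w k i t0"
      unfolding max_k_descending_def
    proof (intro conjI t0 notI)
      assume "\<exists>i' j'. i' \<le> i \<and> t0 \<le> j' \<and> (i', j') \<noteq> (i, t0) \<and> k_descending w k i' j'"
      then obtain a b where ab: "a \<le> i" "t0 \<le> b" "(a, b) \<noteq> (i, t0)" "k_descending w k a b" by blast
      note ad = desc_D[OF ab(4)]
      show False
      proof (cases "a = i")
        case True
        then have "t0 < b" using ab by auto
        then show False using greatest ab(4) True by fastforce
      next
        case False
        have it: "i < t0" using desc_D(1)[OF t0] .
        have "w!i \<le> w!a" using ad(3)[of i] ab it by auto
        moreover have "w!a \<noteq> j" using neqj[of a] ad(1,2) ab(1) False i by auto
        ultimately have "j < w!a" using i by auto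
        then show False using nohigh[of a] ab(1) False by auto
      qed
    qed
    then show ?thesis unfolding k_peak_pos_def by blast
  qed
qed



lemma rok_nth: "rok j k v \<longleftrightarrow> (\<forall>p<length v. j < v!p \<longrightarrow> (\<exists>q<p. v!q + k \<le> j))"
proof (induction v)
  case Nil then show ?case by simp
next
  case (Cons x v)
  have "(\<forall>p<length (x # v). j < (x#v)!p \<longrightarrow> (\<exists>q<p. (x#v)!q + k \<le> j)) \<longleftrightarrow>
        \<not> j < x \<and> (\<forall>p<length v. j < v!p \<longrightarrow> x + k \<le> j \<or> (\<exists>q<p. v!q + k \<le> j))"
    (is "?A \<longleftrightarrow> ?B")
  proof
    assume A: ?A
    have "\<not> j < x" using A[rule_format, of 0] by auto
    moreover have "\<forall>p<length v. j < v!p \<longrightarrow> x + k \<le> j \<or> (\<exists>q<p. v!q + k \<le> j)"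
    proof (intro allI impI)
      fix p assume p: "p < length v" "j < v!p"
      then obtain q where q: "q < Suc p" "(x#v)!q + k \<le> j"
        using A[rule_format, of "Suc p"] by auto
      show "x + k \<le> j \<or> (\<exists>q<p. v!q + k \<le> j)"
      proof (cases q)
        case 0 then show ?thesis using q by auto
      next
        case (Suc q') then show ?thesis using q by auto
      qed
    qed
    ultimately show ?B by blast
  next
    assume B: ?B
    show ?A
    proof (intro allI impI)
      fix p assume p: "p < length (x # v)" "j < (x # v) ! p"
      show "\<exists>q<p. (x # v) ! q + k \<le> j"
      proof (cases p)
        case 0 then show ?thesis using p B by auto
      next
        case (Suc p')
        then have pu: "p' < length v" "j < v!p'" using p by auto
        then have "x + k \<le> j \<or> (\<exists>q<p'. v!q + k \<le> j)" using B by blast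
        then show ?thesis
        proof
          assume "x + k \<le> j" then show ?thesis using Suc by (intro exI[of _ 0]) auto
        next
          assume "\<exists>q<p'. v!q + k \<le> j"
          then obtain q where "q < p'" "v!q + k \<le> j" by blast
          then show ?thesis using Suc by (intro exI[of _ "Suc q"]) auto
        qed
      qed
    qed
  qed
  then show ?case using Cons by (auto simp: lowv_def highv_def)
qed

lemma lok_nth: "rok j k (rev u) \<longleftrightarrow> (\<forall>p<length u. j < u!p \<longrightarrow> (\<exists>q. p < q \<and> q < length u \<and> u!q + k \<le> j))"
proof (induction u rule: rev_induct)
  case Nil then show ?case by simp
next
  case (snoc x u)
  have "(\<forall>p<length (u @ [x]). j < (u@[x])!p \<longrightarrow> (\<exists>q. p < q \<and> q < length (u@[x]) \<and> (u@[x])!q + k \<le> j)) \<longleftrightarrow>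
        \<not> j < x \<and> (\<forall>p<length u. j < u!p \<longrightarrow> x + k \<le> j \<or> (\<exists>q. p < q \<and> q < length u \<and> u!q + k \<le> j))"
    (is "?A \<longleftrightarrow> ?B")
  proof
    assume A: ?A
    have "\<not> j < x" using A[rule_format, of "length u"] by (auto simp: nth_append)
    moreover have "\<forall>p<length u. j < u!p \<longrightarrow> x + k \<le> j \<or> (\<exists>q. p < q \<and> q < length u \<and> u!q + k \<le> j)"
    proof (intro allI impI)
      fix p assume p: "p < length u" "j < u!p"
      then obtain q where q: "p < q" "q < length u + 1" "(u@[x])!q + k \<le> j"
        using A[rule_format, of p] by (auto simp: nth_append)
      show "x + k \<le> j \<or> (\<exists>q. p < q \<and> q < length u \<and> u!q + k \<le> j)"
      proof (cases "q = length u")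
        case True then show ?thesis using q by auto
      next
        case False then show ?thesis using q by (auto simp: nth_append)
      qed
    qed
    ultimately show ?B by blast
  next
    assume B: ?B
    show ?A
    proof (intro allI impI)
      fix p assume p: "p < length (u @ [x])" "j < (u @ [x]) ! p"
      show "\<exists>q. p < q \<and> q < length (u @ [x]) \<and> (u @ [x]) ! q + k \<le> j"
      proof (cases "p = length u")
        case True then show ?thesis using p B by auto
      next
        case False
        then have pu: "p < length u" using p by auto
        then have "j < u!p" using p by (auto simp: nth_append)
        then have "x + k \<le> j \<or> (\<exists>q. p < q \<and> q < length u \<and> u!q + k \<le> j)" using B pu by blast
        then show ?thesis
        proof
          assume "x + k \<le> j" then show ?thesis using pu by (intro exI[of _ "length u"]) auto
        next
          assume "\<exists>q. p < q \<and> q < length u \<and> u!q + k \<le> j"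
          then obtain q where "p < q" "q < length u" "u!q + k \<le> j" by blast
          then show ?thesis by (intro exI[of _ q]) (auto simp: nth_append)
        qed
      qed
    qed
  qed
  then show ?case using snoc by (auto simp: lowv_def highv_def)
qed


lemma Lc_rok:
  assumes "w = xs @ j # ys"
  shows "Lc j k w (length xs) \<longleftrightarrow> rok j k (rev xs)"
proof -
  have e: "\<And>p. p < length xs \<Longrightarrow> w ! p = xs ! p" using assms by (simp add: nth_append)
  show ?thesis unfolding lok_nth Lc_def
  proof (intro iffI allI impI)
    fix p assume A: "\<forall>p<length xs. j < w ! p \<longrightarrow> (\<exists>q>p. q < length xs \<and> w ! q + k \<le> j)"
      and p: "p < length xs" "j < xs ! p"
    then obtain q where "p < q" "q < length xs" "w ! q + k \<le> j" using e by force
    then show "\<exists>q>p. q < length xs \<and> xs ! q + k \<le> j" using e by auto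
  next
    fix p assume A: "\<forall>p<length xs. j < xs ! p \<longrightarrow> (\<exists>q>p. q < length xs \<and> xs ! q + k \<le> j)"
      and p: "p < length xs" "j < w ! p"
    then obtain q where "p < q" "q < length xs" "xs ! q + k \<le> j" using e by force
    then show "\<exists>q>p. q < length xs \<and> w ! q + k \<le> j" using e by auto
  qed
qed

lemma Rc_rok:
  assumes w: "w = xs @ j # ys"
  shows "Rc j k w (length xs) \<longleftrightarrow> rok j k ys"
proof -
  have nth: "\<And>p. w ! Suc (length xs + p) = ys ! p" using w by (simp add: nth_append)
  have lw: "length w = Suc (length xs + length ys)" using w by simp
  show ?thesis
  proof
    assume R: "Rc j k w (length xs)"
    show "rok j k ys" unfolding rok_nth
    proof (intro allI impI)
      fix p assume p: "p < length ys" "j < ys!p"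
      have a1: "length xs < Suc (length xs + p)" by simp
      have a2: "Suc (length xs + p) < length w" using p lw by simp
      have a3: "j < w ! Suc (length xs + p)" using p nth by simp
      obtain q where q: "length xs < q" "q < Suc (length xs + p)" "w!q + k \<le> j"
        using R[unfolded Rc_def, rule_format, OF a1 a2 a3] by blast
      obtain q' where q': "q = Suc (length xs + q')" using less_imp_Suc_add[OF q(1)] by blast
      have "q' < p" "ys!q' + k \<le> j" using q q' nth by auto
      then show "\<exists>q<p. ys!q + k \<le> j" by blast
    qed
  next
    assume r: "rok j k ys"
    show "Rc j k w (length xs)" unfolding Rc_def
    proof (intro allI impI)
      fix p assume p: "length xs < p" "p < length w" "j < w!p"
      obtain p' where p': "p = Suc (length xs + p')" using less_imp_Suc_add[OF p(1)] by blast
      have "p' < length ys" "j < ys!p'" using p p' lw nth by auto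
      then obtain q where q: "q < p'" "ys!q + k \<le> j" using r unfolding rok_nth by blast
      have "w ! Suc (length xs + q) + k \<le> j" using q nth by simp
      moreover have "length xs < Suc (length xs + q)" "Suc (length xs + q) < p" using q p' by auto
      ultimately show "\<exists>q. length xs < q \<and> q < p \<and> w!q + k \<le> j" by blast
    qed
  qed
qed

lemma peak_iff:
  assumes dist: "distinct w" and w: "w = xs @ j # ys" and k: "1 \<le> k"
  shows "is_k_peak_value w k j \<longleftrightarrow> CC j k w \<and> (\<exists>p<length w. w!p + k \<le> j)"
proof -
  define i where "i = length xs"
  have i: "i < length w" "w!i = j" using w unfolding i_def by auto
  have uniq: "\<And>i'. i' < length w \<Longrightarrow> w!i' = j \<Longrightarrow> i' = i"
    using dist i by (metis nth_eq_iff_index_eq)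
  have "is_k_peak_value w k j \<longleftrightarrow> k_peak_pos w k i"
    unfolding is_k_peak_value_def using uniq i by blast
  also have "\<dots> \<longleftrightarrow> Lc j k w i \<and> Rc j k w i \<and> (\<exists>p<length w. w!p + k \<le> j)"
  proof
    assume "k_peak_pos w k i"
    then show "Lc j k w i \<and> Rc j k w i \<and> (\<exists>p<length w. w!p + k \<le> j)"
      unfolding k_peak_pos_def using peak_fwd_asc[OF dist i k] peak_fwd_desc[OF dist i k] by blast
  next
    assume "Lc j k w i \<and> Rc j k w i \<and> (\<exists>p<length w. w!p + k \<le> j)"
    then show "k_peak_pos w k i" using peak_bwd[OF dist i k] by blast
  qed
  also have "\<dots> \<longleftrightarrow> CC j k w \<and> (\<exists>p<length w. w!p + k \<le> j)"
  proof -
    have "j \<notin> set xs" "j \<notin> set ys" using dist w by auto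
    then have "CC j k w \<longleftrightarrow> rok j k (rev xs) \<and> rok j k ys" using CC_split w by blast
    then show ?thesis using Lc_rok[OF w] Rc_rok[OF w] unfolding i_def by blast
  qed
  finally show ?thesis .
qed

theorem proposition3p3:
  fixes n j k :: nat
  assumes "n \<ge> 2" and "1 \<le> j" and "j \<le> n" and "1 \<le> k" and "k \<le> n - 1"
  shows "p_peak n k j =
    (if j \<le> k then 0
     else real ((j - k) * (j - k + 1)) / real ((n - k) * (n - k + 1)))"
proof -
  let ?P = "permutations_of_set {1..n}"
  have split: "\<And>w. w \<in> ?P \<Longrightarrow> distinct w \<and> (\<exists>xs ys. w = xs @ j # ys)"
  proof -
    fix w assume "w \<in> ?P"
    then have "distinct w" "set w = {1..n}" by (auto simp: permutations_of_set_def)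
    moreover have "j \<in> set w" using assms calculation(2) by auto
    then obtain xs ys where "w = xs @ j # ys" using split_list[of j w] by blast
    ultimately show "distinct w \<and> (\<exists>xs ys. w = xs @ j # ys)" by blast
  qed
  show ?thesis
  proof (cases "j \<le> k")
    case True
    have "{w \<in> ?P. is_k_peak_value w k j} = {}"
    proof (rule ccontr)
      assume "{w \<in> ?P. is_k_peak_value w k j} \<noteq> {}"
      then obtain w where w: "w \<in> ?P" "is_k_peak_value w k j" by blast
      obtain xs ys where xy: "w = xs @ j # ys" using split[OF w(1)] by blast
      obtain p where p: "p < length w" "w!p + k \<le> j" using peak_iff[OF _ xy assms(4)] split[OF w(1)] w(2) by blast
      have "w!p \<in> set w" using p by auto
      then have "w!p \<ge> 1" using w(1) by (auto simp: permutations_of_set_def)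
      then show False using p True by auto
    qed
    then show ?thesis using True unfolding p_peak_def by simp
  next
    case False
    have eq: "{w \<in> ?P. is_k_peak_value w k j} = {w \<in> ?P. CC j k w}"
    proof (intro Collect_cong conj_cong refl)
      fix w assume w: "w \<in> ?P"
      obtain xs ys where xy: "w = xs @ j # ys" using split[OF w] by blast
      have "1 \<in> set w" using w assms by (auto simp: permutations_of_set_def)
      then obtain p where "p < length w" "w!p = 1" by (metis in_set_conv_nth)
      then have "\<exists>p<length w. w!p + k \<le> j" using False by auto
      then show "is_k_peak_value w k j = CC j k w" using peak_iff[OF _ xy assms(4)] split[OF w] by blast
    qed
    have lA: "lA j k {1..n} = j - k"
    proof -
      have "{x \<in> {1..n}. lowv j k x} = {1..j-k}" using False assms by (auto simp: lowv_def)
      then show ?thesis unfolding lA_def by simp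
    qed
    have hA: "hA j {1..n} = n - j"
    proof -
      have "{x \<in> {1..n}. highv j x} = {j+1..n}" by (auto simp: highv_def)
      then show ?thesis unfolding hA_def by simp
    qed
    have s: "j - k + (n - j) = n - k" using False assms by auto
    have "real (FF j k {1..n}) = fact n * cF (j - k) (n - k)"
      using FF_formula[OF assms(4), of "{1..n}"] assms lA hA s by simp
    moreover have "n - k \<noteq> 0" using assms by auto
    ultimately have "p_peak n k j = cF (j - k) (n - k)"
      unfolding p_peak_def eq FF_def by simp
    also have "\<dots> = real ((j - k) * (j - k + 1)) / real ((n - k) * (n - k + 1))"
    proof -
      have d: "real ((n-k)*(n-k+1)) = real (n-k+1) * real (n-k)" by (simp only: of_nat_mult mult.commute)
      show ?thesis unfolding cF_def d using \<open>n - k \<noteq> 0\<close> by (simp only: if_False simp_thms)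
    qed
    finally show ?thesis using False by simp
  qed
qed

end
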